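(* Let $\xi\in\mathfrak X(\mathcal M)$ and $m\ge2$ an integer. Then $$\mathcal L^{(m)}_\xi R^\mu{}_{\alpha\nu\beta}=H^{\gamma\rho}_{\nu\beta}\Big(\nabla_\gamma\Sigma^{(m)}{}^\mu{}_{\alpha\rho}+\sum_{k=0}^{m-2}\binom{m}{k+1}\Sigma^{(m-k-1)}{}^\sigma{}_{\alpha\rho}\Sigma^{(k+1)}{}^\mu{}_{\sigma\gamma}\Big)$$ and $$\mathcal L^{(m)}_\xi R_{\alpha\beta}=H^{\gamma\rho}_{\mu\beta}\Big(\nabla_\gamma\Sigma^{(m)}{}^\mu{}_{\alpha\rho}+\sum_{k=0}^{m-2}\binom{m}{k+1}\Sigma^{(m-k-1)}{}^\sigma{}_{\alpha\rho}\Sigma^{(k+1)}{}^\mu{}_{\sigma\gamma}\Big).$$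
   Context: $(\mathcal M,g)$ is a semi-Riemannian manifold with Levi-Civita connection $\nabla$, Riemann tensor $R^\mu{}_{\alpha\nu\beta}$ with the convention $(\nabla_\nu\nabla_\beta-\nabla_\beta\nabla_\nu)X^\mu=R^\mu{}_{\alpha\nu\beta}X^\alpha$, and Ricci tensor $R_{\alpha\beta}=R^\mu{}_{\alpha\mu\beta}$. $\mathcal L^{(m)}_\xi$ is the $m$-fold Lie derivative. $H^{\gamma\rho}_{\nu\beta}:=\delta^\gamma_\nu\delta^\rho_\beta-\delta^\gamma_\beta\delta^\rho_\nu$. $\Sigma:=\mathcal L_\xi\nabla$, i.e. $\Sigma^\alpha{}_{\mu\nu}=\frac12g^{\alpha\beta}(\nabla_\mu\mathcal K_{\nu\beta}+\nabla_\nu\mathcal K_{\mu\beta}-\nabla_\beta\mathcal K_{\mu\nu})$ with $\mathcal K:=\mathcal L_\xi g$, and $\Sigma^{(k)}:=\mathcal L^{(k-1)}_\xi\Sigma$ for $k\ge1$. *)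

theory Defs
  imports "HOL-Analysis.Analysis"
begin

text \<open>Local-coordinate rendering: the manifold is represented by a coordinate chart,
an open set U of real^'n; tensor fields are given by their component functions
(indices range over the finite type 'n). Index order in the names follows the paper:
upper indices first, then lower indices in order.\<close>

type_synonym 'n vf  = "'n \<Rightarrow> real^'n \<Rightarrow> real"
type_synonym 'n t02 = "'n \<Rightarrow> 'n \<Rightarrow> real^'n \<Rightarrow> real"
type_synonym 'n t12 = "'n \<Rightarrow> 'n \<Rightarrow> 'n \<Rightarrow> real^'n \<Rightarrow> real"
type_synonym 'n t13 = "'n \<Rightarrow> 'n \<Rightarrow> 'n \<Rightarrow> 'n \<Rightarrow> real^'n \<Rightarrow> real"

definition pd :: "'n::finite \<Rightarrow> (real^'n \<Rightarrow> real) \<Rightarrow> real^'n \<Rightarrow> real" where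
  "pd i f x = deriv (\<lambda>t. f (x + t *\<^sub>R axis i 1)) 0"

primrec Ck :: "nat \<Rightarrow> (real^'n::finite) set \<Rightarrow> (real^'n \<Rightarrow> real) \<Rightarrow> bool" where
  "Ck 0 U f = continuous_on U f"
| "Ck (Suc k) U f = ((\<forall>x\<in>U. f differentiable (at x)) \<and> (\<forall>i. Ck k U (pd i f)))"

definition coord_smooth :: "(real^'n::finite) set \<Rightarrow> (real^'n \<Rightarrow> real) \<Rightarrow> bool" where
  "coord_smooth U f = (\<forall>k. Ck k U f)"

definition semi_riem_metric :: "(real^'n::finite) set \<Rightarrow> 'n t02 \<Rightarrow> bool" where
  "semi_riem_metric U g =
     ((\<forall>i j. coord_smooth U (g i j)) \<and> (\<forall>i j x. g i j x = g j i x)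
      \<and> (\<forall>x\<in>U. det (\<chi> i j. g i j x) \<noteq> 0))"

definition ginv :: "'n::finite t02 \<Rightarrow> 'n t02" where
  "ginv g i j x = matrix_inv (\<chi> a b. g a b x) $ i $ j"

definition chris :: "'n::finite t02 \<Rightarrow> 'n t12" where
  "chris g a b c x = (1/2) * (\<Sum>d\<in>UNIV. ginv g a d x *
      (pd b (g c d) x + pd c (g b d) x - pd d (g b c) x))"

text \<open>Covariant derivatives: cov02 g K e b c = \<nabla>_e K_{bc}; cov12 g T e a b c = \<nabla>_e T^a_{bc}.\<close>
definition cov02 :: "'n::finite t02 \<Rightarrow> 'n t02 \<Rightarrow> 'n t12" where
  "cov02 g K e b c x = pd e (K b c) x
     - (\<Sum>d\<in>UNIV. chris g d e b x * K d c x) - (\<Sum>d\<in>UNIV. chris g d e c x * K b d x)"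

definition cov12 :: "'n::finite t02 \<Rightarrow> 'n t12 \<Rightarrow> 'n t13" where
  "cov12 g T e a b c x = pd e (T a b c) x
     + (\<Sum>d\<in>UNIV. chris g a e d x * T d b c x)
     - (\<Sum>d\<in>UNIV. chris g d e b x * T a d c x)
     - (\<Sum>d\<in>UNIV. chris g d e c x * T a b d x)"

text \<open>Riemann tensor R^\<mu>_{\<alpha>\<nu>\<beta>} with (\<nabla>_\<nu>\<nabla>_\<beta> - \<nabla>_\<beta>\<nabla>_\<nu>)X^\<mu> = R^\<mu>_{\<alpha>\<nu>\<beta>} X^\<alpha>,
written out in coordinates; Ricci R_{\<alpha>\<beta>} = R^\<mu>_{\<alpha>\<mu>\<beta>}.\<close>
definition riem :: "'n::finite t02 \<Rightarrow> 'n t13" where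
  "riem g \<mu> \<alpha> \<nu> \<beta> x = pd \<nu> (chris g \<mu> \<beta> \<alpha>) x - pd \<beta> (chris g \<mu> \<nu> \<alpha>) x
     + (\<Sum>l\<in>UNIV. chris g \<mu> \<nu> l x * chris g l \<beta> \<alpha> x)
     - (\<Sum>l\<in>UNIV. chris g \<mu> \<beta> l x * chris g l \<nu> \<alpha> x)"

definition ricci :: "'n::finite t02 \<Rightarrow> 'n t02" where
  "ricci g \<alpha> \<beta> x = (\<Sum>\<mu>\<in>UNIV. riem g \<mu> \<alpha> \<mu> \<beta> x)"

definition lie02 :: "'n::finite vf \<Rightarrow> 'n t02 \<Rightarrow> 'n t02" where
  "lie02 \<xi> T a b x = (\<Sum>c\<in>UNIV. \<xi> c x * pd c (T a b) x)
     + (\<Sum>c\<in>UNIV. T c b x * pd a (\<xi> c) x) + (\<Sum>c\<in>UNIV. T a c x * pd b (\<xi> c) x)"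

definition lie12 :: "'n::finite vf \<Rightarrow> 'n t12 \<Rightarrow> 'n t12" where
  "lie12 \<xi> T a b c x = (\<Sum>d\<in>UNIV. \<xi> d x * pd d (T a b c) x)
     - (\<Sum>d\<in>UNIV. T d b c x * pd d (\<xi> a) x)
     + (\<Sum>d\<in>UNIV. T a d c x * pd b (\<xi> d) x) + (\<Sum>d\<in>UNIV. T a b d x * pd c (\<xi> d) x)"

definition lie13 :: "'n::finite vf \<Rightarrow> 'n t13 \<Rightarrow> 'n t13" where
  "lie13 \<xi> T a b c e x = (\<Sum>d\<in>UNIV. \<xi> d x * pd d (T a b c e) x)
     - (\<Sum>d\<in>UNIV. T d b c e x * pd d (\<xi> a) x)
     + (\<Sum>d\<in>UNIV. T a d c e x * pd b (\<xi> d) x)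
     + (\<Sum>d\<in>UNIV. T a b d e x * pd c (\<xi> d) x)
     + (\<Sum>d\<in>UNIV. T a b c d x * pd e (\<xi> d) x)"

text \<open>\<K> = L_\<xi> g; \<Sigma> = L_\<xi>\<nabla>; \<Sigma>^(k) = L_\<xi>^(k-1) \<Sigma> for k \<ge> 1.\<close>
definition Kdef :: "'n::finite vf \<Rightarrow> 'n t02 \<Rightarrow> 'n t02" where
  "Kdef \<xi> g = lie02 \<xi> g"

definition Sigma1 :: "'n::finite vf \<Rightarrow> 'n t02 \<Rightarrow> 'n t12" where
  "Sigma1 \<xi> g \<alpha> \<mu> \<nu> x = (1/2) * (\<Sum>\<beta>\<in>UNIV. ginv g \<alpha> \<beta> x *
      (cov02 g (Kdef \<xi> g) \<mu> \<nu> \<beta> x + cov02 g (Kdef \<xi> g) \<nu> \<mu> \<beta> x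
       - cov02 g (Kdef \<xi> g) \<beta> \<mu> \<nu> x))"

definition SigmaK :: "nat \<Rightarrow> 'n::finite vf \<Rightarrow> 'n t02 \<Rightarrow> 'n t12" where
  "SigmaK k \<xi> g = (lie12 \<xi> ^^ (k - 1)) (Sigma1 \<xi> g)"

definition Hdelta :: "'n \<Rightarrow> 'n \<Rightarrow> 'n \<Rightarrow> 'n \<Rightarrow> real" where
  "Hdelta \<gamma> \<rho> \<nu> \<beta> = (if \<gamma> = \<nu> \<and> \<rho> = \<beta> then 1 else 0) - (if \<gamma> = \<beta> \<and> \<rho> = \<nu> then 1 else 0)"

definition bracketTerm :: "nat \<Rightarrow> 'n::finite vf \<Rightarrow> 'n t02 \<Rightarrow> 'n \<Rightarrow> 'n \<Rightarrow> 'n \<Rightarrow> 'n \<Rightarrow> real^'n \<Rightarrow> real" where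
  "bracketTerm m \<xi> g \<gamma> \<mu> \<alpha> \<rho> x = cov12 g (SigmaK m \<xi> g) \<gamma> \<mu> \<alpha> \<rho> x
     + (\<Sum>k=0..m-2. of_nat (m choose (k+1)) *
          (\<Sum>\<sigma>\<in>UNIV. SigmaK (m-k-1) \<xi> g \<sigma> \<alpha> \<rho> x * SigmaK (k+1) \<xi> g \<mu> \<sigma> \<gamma> x))"

end

theory Submission
  imports Defs
begin


lemma line_deriv:
  assumes "(f has_derivative f') (at z)" and "y + t0 *\<^sub>R e = z"
  shows "((\<lambda>t. f (y + t *\<^sub>R e)) has_real_derivative f' e) (at t0)"
proof -
  have l: "linear f'" using assms(1) has_derivative_linear by blast
  have "((\<lambda>t. y + t *\<^sub>R e) has_derivative (\<lambda>h. h *\<^sub>R e)) (at t0)"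
    by (auto intro!: derivative_eq_intros)
  moreover have "(f has_derivative f') (at ((\<lambda>t. y + t *\<^sub>R e) t0))" using assms by simp
  ultimately have "((f \<circ> (\<lambda>t. y + t *\<^sub>R e)) has_derivative (f' \<circ> (\<lambda>h. h *\<^sub>R e))) (at t0)"
    by (rule diff_chain_at)
  then have "((\<lambda>t. f (y + t *\<^sub>R e)) has_derivative (\<lambda>h. f' (h *\<^sub>R e))) (at t0)"
    by (simp add: o_def)
  then show ?thesis unfolding has_field_derivative_def
    by (rule has_derivative_eq_rhs) (auto simp: linear_cmul[OF l] fun_eq_iff)
qed

lemma pd_eq:
  assumes "(f has_derivative f') (at z)"
  shows "pd i f z = f' (axis i 1)"
  unfolding pd_def by (rule DERIV_imp_deriv, rule line_deriv[OF assms]) simp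

lemma pd_line:
  assumes "f differentiable (at (y + t0 *\<^sub>R axis i 1))"
  shows "((\<lambda>t. f (y + t *\<^sub>R axis i 1)) has_real_derivative pd i f (y + t0 *\<^sub>R axis i 1)) (at t0)"
proof -
  obtain f' where f': "(f has_derivative f') (at (y + t0 *\<^sub>R axis i 1))"
    using assms differentiable_def by blast
  show ?thesis using line_deriv[OF f' refl] pd_eq[OF f'] by simp
qed

lemma pd_add:
  assumes "f differentiable (at z)" "h differentiable (at z)"
  shows "pd i (\<lambda>y. f y + h y) z = pd i f z + pd i h z"
proof -
  obtain f' h' where a: "(f has_derivative f') (at z)" "(h has_derivative h') (at z)"
    using assms differentiable_def by metis
  show ?thesis using pd_eq[OF has_derivative_add[OF a]] pd_eq[OF a(1)] pd_eq[OF a(2)] by simp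
qed

lemma pd_diff:
  assumes "f differentiable (at z)" "h differentiable (at z)"
  shows "pd i (\<lambda>y. f y - h y) z = pd i f z - pd i h z"
proof -
  obtain f' h' where a: "(f has_derivative f') (at z)" "(h has_derivative h') (at z)"
    using assms differentiable_def by metis
  show ?thesis using pd_eq[OF has_derivative_diff[OF a]] pd_eq[OF a(1)] pd_eq[OF a(2)] by simp
qed

lemma pd_mult:
  fixes f h :: "real^'n::finite \<Rightarrow> real"
  assumes "f differentiable (at z)" "h differentiable (at z)"
  shows "pd i (\<lambda>y. f y * h y) z = pd i f z * h z + f z * pd i h z"
proof -
  obtain f' h' where a: "(f has_derivative f') (at z)" "(h has_derivative h') (at z)"
    using assms differentiable_def by metis
  have "((\<lambda>y. f y * h y) has_derivative (\<lambda>v. f z * h' v + f' v * h z)) (at z)"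
    using has_derivative_mult[OF a] .
  from pd_eq[OF this] pd_eq[OF a(1)] pd_eq[OF a(2)] show ?thesis by simp
qed

lemma pd_const: "pd i (\<lambda>y. c) z = 0"
proof -
  have "pd i (\<lambda>y. c) z = (\<lambda>h. 0) (axis i 1)" by (rule pd_eq) (rule has_derivative_const)
  then show ?thesis by simp
qed

lemma pd_sum:
  fixes f :: "'a \<Rightarrow> real^'n::finite \<Rightarrow> real"
  assumes "\<And>a. a \<in> A \<Longrightarrow> f a differentiable (at z)"
  shows "pd i (\<lambda>y. \<Sum>a\<in>A. f a y) z = (\<Sum>a\<in>A. pd i (f a) z)"
proof -
  have "\<forall>a\<in>A. \<exists>f'. (f a has_derivative f') (at z)" using assms differentiable_def by metis
  then obtain F where F: "\<And>a. a \<in> A \<Longrightarrow> (f a has_derivative F a) (at z)" by metis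
  have "((\<lambda>y. \<Sum>a\<in>A. f a y) has_derivative (\<lambda>v. \<Sum>a\<in>A. F a v)) (at z)"
    by (rule has_derivative_sum) (rule F)
  from pd_eq[OF this] show ?thesis using pd_eq[OF F] by (auto intro: sum.cong)
qed

lemma pd_local:
  assumes "open U" "z \<in> U" "\<And>y. y \<in> U \<Longrightarrow> f y = h y"
  shows "pd i f z = pd i h z"
proof -
  obtain r where r: "r > 0" "ball z r \<subseteq> U" using assms(1,2) open_contains_ball by blast
  have ev: "eventually (\<lambda>t. f (z + t *\<^sub>R axis i 1) = h (z + t *\<^sub>R axis i 1)) (nhds (0::real))"
    unfolding eventually_nhds_metric
  proof (intro exI[of _ r] conjI allI impI)
    fix t :: real assume "dist t 0 < r"
    then have "z + t *\<^sub>R axis i 1 \<in> ball z r" by (simp add: dist_norm norm_axis_1)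
    then show "f (z + t *\<^sub>R axis i 1) = h (z + t *\<^sub>R axis i 1)" using r assms(3) by blast
  qed (use r in auto)
  have "\<And>D. DERIV (\<lambda>t. f (z + t *\<^sub>R axis i 1)) 0 :> D \<longleftrightarrow> DERIV (\<lambda>t. h (z + t *\<^sub>R axis i 1)) 0 :> D"
    by (rule DERIV_cong_ev[OF refl ev refl])
  then show ?thesis unfolding pd_def deriv_def by simp
qed

lemma Ck_cont: "Ck k U f \<Longrightarrow> continuous_on U f"
proof (cases k)
  case (Suc j)
  assume "Ck k U f"
  then have "\<forall>x\<in>U. f differentiable (at x)" using Suc by simp
  then show ?thesis by (meson continuous_at_imp_continuous_on differentiable_imp_continuous_within)
qed simp

lemma Ck_Suc_D: "Ck (Suc k) U f \<Longrightarrow> Ck k U f"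
proof (induction k arbitrary: f)
  case 0 then show ?case using Ck_cont by fastforce
next
  case (Suc k) then show ?case by simp
qed

lemma Ck_le: "j \<le> k \<Longrightarrow> Ck k U f \<Longrightarrow> Ck j U f"
proof (induction k)
  case 0 then show ?case by simp
next
  case (Suc k) then show ?case using Ck_Suc_D le_Suc_eq by blast
qed




lemma Ck_cong:
  assumes "open U" "\<And>y. y \<in> U \<Longrightarrow> f y = h y" "Ck k U f"
  shows "Ck k U h"
  using assms(2,3)
proof (induction k arbitrary: f h)
  case 0 then show ?case using continuous_on_cong by (metis Ck.simps(1))
next
  case (Suc k)
  have d: "\<forall>x\<in>U. h differentiable (at x)"
  proof
    fix x assume x: "x \<in> U"
    have "f differentiable (at x)" using Suc.prems x by simp
    then obtain f' where "(f has_derivative f') (at x)" unfolding differentiable_def by blast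
    then have "(h has_derivative f') (at x)"
      by (rule has_derivative_transform_within_open[OF _ assms(1) x]) (use Suc.prems in auto)
    then show "h differentiable (at x)" using differentiable_def by blast
  qed
  have "\<forall>i. Ck k U (pd i h)"
  proof
    fix i
    have "Ck k U (pd i f)" using Suc.prems by simp
    moreover have "\<And>y. y \<in> U \<Longrightarrow> pd i f y = pd i h y"
      by (rule pd_local[OF assms(1)]) (use Suc.prems in auto)
    ultimately show "Ck k U (pd i h)" using Suc.IH by blast
  qed
  with d show ?case by simp
qed

lemma Ck_const: fixes U :: "(real^'n::finite) set" shows "Ck k U (\<lambda>y. c)"
proof (induction k arbitrary: c)
  case (Suc k)
  have "\<forall>i. Ck k U (pd i (\<lambda>y. c))"
  proof
    fix i :: 'n
    have "pd i (\<lambda>y. c) = (\<lambda>y. 0)" by (rule ext) (rule pd_const)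
    then show "Ck k U (pd i (\<lambda>y. c))" using Suc.IH[of 0] by simp
  qed
  then show ?case by simp
qed simp

lemma Ck_add:
  assumes U: "open U"
  shows "Ck k U f \<Longrightarrow> Ck k U h \<Longrightarrow> Ck k U (\<lambda>y. f y + h y)"
proof (induction k arbitrary: f h)
  case 0 then show ?case by (simp add: continuous_on_add)
next
  case (Suc k)
  have "Ck k U (pd i (\<lambda>y. f y + h y))" for i
  proof -
    have "Ck k U (\<lambda>y. pd i f y + pd i h y)" using Suc by simp
    then show ?thesis by (rule Ck_cong[OF U, rotated]) (use Suc.prems in \<open>simp add: pd_add\<close>)
  qed
  then show ?case using Suc.prems by simp
qed

lemma Ck_diff:
  assumes U: "open U"
  shows "Ck k U f \<Longrightarrow> Ck k U h \<Longrightarrow> Ck k U (\<lambda>y. f y - h y)"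
proof (induction k arbitrary: f h)
  case 0 then show ?case by (simp add: continuous_on_diff)
next
  case (Suc k)
  have "Ck k U (pd i (\<lambda>y. f y - h y))" for i
  proof -
    have "Ck k U (\<lambda>y. pd i f y - pd i h y)" using Suc by simp
    then show ?thesis by (rule Ck_cong[OF U, rotated]) (use Suc.prems in \<open>simp add: pd_diff\<close>)
  qed
  then show ?case using Suc.prems by simp
qed

lemma Ck_mult:
  assumes U: "open U"
  shows "Ck k U f \<Longrightarrow> Ck k U h \<Longrightarrow> Ck k U (\<lambda>y. f y * h y)"
proof (induction k arbitrary: f h)
  case 0 then show ?case by (simp add: continuous_on_mult)
next
  case (Suc k)
  have "Ck k U (pd i (\<lambda>y. f y * h y))" for i
  proof -
    have "Ck k U f" "Ck k U h" using Suc.prems Ck_Suc_D by blast+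
    then have "Ck k U (\<lambda>y. pd i f y * h y)" "Ck k U (\<lambda>y. f y * pd i h y)" using Suc by simp_all
    then have "Ck k U (\<lambda>y. pd i f y * h y + f y * pd i h y)" by (rule Ck_add[OF U])
    then show ?thesis by (rule Ck_cong[OF U, rotated]) (use Suc.prems in \<open>simp add: pd_mult\<close>)
  qed
  then show ?case using Suc.prems by simp
qed

lemma Ck_sum:
  assumes U: "open U"
  shows "finite A \<Longrightarrow> (\<And>a. a \<in> A \<Longrightarrow> Ck k U (f a)) \<Longrightarrow> Ck k U (\<lambda>y. \<Sum>a\<in>A. f a y)"
proof (induction A rule: finite_induct)
  case empty then show ?case using Ck_const by simp
next
  case (insert a A) then show ?case using Ck_add[OF U] by simp
qed

lemma Ck_prod:
  assumes U: "open U"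
  shows "finite A \<Longrightarrow> (\<And>a. a \<in> A \<Longrightarrow> Ck k U (f a)) \<Longrightarrow> Ck k U (\<lambda>y. \<Prod>a\<in>A. f a y)"
proof (induction A rule: finite_induct)
  case empty then show ?case using Ck_const by simp
next
  case (insert a A) then show ?case using Ck_mult[OF U] by simp
qed

lemma Ck_inverse:
  assumes U: "open U"
  shows "Ck k U f \<Longrightarrow> (\<And>y. y \<in> U \<Longrightarrow> f y \<noteq> 0) \<Longrightarrow> Ck k U (\<lambda>y. inverse (f y))"
proof (induction k arbitrary: f)
  case 0 then show ?case by (simp add: continuous_on_inverse)
next
  case (Suc k)
  have fd: "\<And>y. y \<in> U \<Longrightarrow> f differentiable (at y)" using Suc.prems by simp
  have d: "\<forall>y\<in>U. (\<lambda>y. inverse (f y)) differentiable (at y)"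
  proof
    fix y assume y: "y \<in> U"
    then obtain f' where f': "(f has_derivative f') (at y)" using fd differentiable_def by blast
    show "(\<lambda>y. inverse (f y)) differentiable (at y)"
      using Deriv.has_derivative_inverse[OF Suc.prems(2)[OF y] f'] differentiable_def by blast
  qed
  have pdi: "pd i (\<lambda>y. inverse (f y)) y = - (inverse (f y) * pd i f y * inverse (f y))" if y: "y \<in> U" for i y
  proof -
    obtain f' where f': "(f has_derivative f') (at y)" using fd[OF y] differentiable_def by blast
    show ?thesis using pd_eq[OF Deriv.has_derivative_inverse[OF Suc.prems(2)[OF y] f']] pd_eq[OF f'] by simp
  qed
  have "Ck k U (pd i (\<lambda>y. inverse (f y)))" for i
  proof -
    have fk: "Ck k U f" using Suc.prems Ck_Suc_D by blast
    have ik: "Ck k U (\<lambda>y. inverse (f y))" using Suc.IH[OF fk] Suc.prems by blast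
    have "Ck k U (\<lambda>y. inverse (f y) * pd i f y)" using Ck_mult[OF U ik] Suc.prems by simp
    then have "Ck k U (\<lambda>y. inverse (f y) * pd i f y * inverse (f y))" using Ck_mult[OF U _ ik] by blast
    then have "Ck k U (\<lambda>y. 0 - inverse (f y) * pd i f y * inverse (f y))" using Ck_diff[OF U Ck_const] by blast
    then show ?thesis by (rule Ck_cong[OF U, rotated]) (simp add: pdi)
  qed
  with d show ?case by simp
qed

lemma second_diff:
  fixes f :: "real^'n::finite \<Rightarrow> real"
  assumes B: "ball x r \<subseteq> U" and f: "Ck 2 U f" and h: "0 < h" "2 * h < r"
  shows "\<exists>p. dist p x < 2 * h \<and>
    f (x + h *\<^sub>R axis i 1 + h *\<^sub>R axis j 1) - f (x + h *\<^sub>R axis i 1) - f (x + h *\<^sub>R axis j 1) + f x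
    = h * h * pd j (pd i f) p"
proof -
  let ?a = "axis i (1::real) :: real^'n" and ?b = "axis j (1::real) :: real^'n"
  have inU: "x + s *\<^sub>R ?a + t *\<^sub>R ?b \<in> U" if "\<bar>s\<bar> \<le> h" "\<bar>t\<bar> \<le> h" for s t
  proof -
    have "norm (s *\<^sub>R ?a + t *\<^sub>R ?b) \<le> norm (s *\<^sub>R ?a) + norm (t *\<^sub>R ?b)" by (rule norm_triangle_ineq)
    also have "\<dots> \<le> 2 * h" using that by simp
    finally have "dist (x + s *\<^sub>R ?a + t *\<^sub>R ?b) x < r" using h by (simp add: dist_norm add.assoc)
    then show ?thesis using B by (auto simp: dist_commute)
  qed
  have fd: "\<And>y. y \<in> U \<Longrightarrow> f differentiable (at y)" and fid: "\<And>y. y \<in> U \<Longrightarrow> pd i f differentiable (at y)"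
    using f by (simp_all add: numeral_2_eq_2)
  define u where "u s = f (x + h *\<^sub>R ?b + s *\<^sub>R ?a) - f (x + s *\<^sub>R ?a)" for s
  define u' where "u' s = pd i f (x + h *\<^sub>R ?b + s *\<^sub>R ?a) - pd i f (x + s *\<^sub>R ?a)" for s
  have "\<exists>z. 0 < z \<and> z < h \<and> u h - u 0 = (h - 0) * u' z"
  proof (rule MVT2[OF h(1)])
    fix s assume s: "0 \<le> s" "s \<le> h"
    have "x + h *\<^sub>R ?b + s *\<^sub>R ?a \<in> U" using inU[of s h] s h by (simp add: algebra_simps)
    then have d1: "((\<lambda>t. f (x + h *\<^sub>R ?b + t *\<^sub>R ?a)) has_real_derivative pd i f (x + h *\<^sub>R ?b + s *\<^sub>R ?a)) (at s)"
      by (intro pd_line fd)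
    have "x + s *\<^sub>R ?a \<in> U" using inU[of s 0] s h by simp
    then have d2: "((\<lambda>t. f (x + t *\<^sub>R ?a)) has_real_derivative pd i f (x + s *\<^sub>R ?a)) (at s)"
      by (intro pd_line fd)
    show "DERIV u s :> u' s" unfolding u_def[abs_def] u'_def using DERIV_diff[OF d1 d2] by simp
  qed
  then obtain s1 where s1: "0 < s1" "s1 < h" "u h - u 0 = h * u' s1" by auto
  define v where "v t = pd i f (x + s1 *\<^sub>R ?a + t *\<^sub>R ?b)" for t
  have "\<exists>z. 0 < z \<and> z < h \<and> v h - v 0 = (h - 0) * pd j (pd i f) (x + s1 *\<^sub>R ?a + z *\<^sub>R ?b)"
  proof (rule MVT2[OF h(1)])
    fix t assume t: "0 \<le> t" "t \<le> h"
    have "x + s1 *\<^sub>R ?a + t *\<^sub>R ?b \<in> U" using inU[of s1 t] s1 t by simp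
    then show "DERIV v t :> pd j (pd i f) (x + s1 *\<^sub>R ?a + t *\<^sub>R ?b)" unfolding v_def[abs_def]
      by (intro pd_line fid)
  qed
  then obtain t1 where t1: "0 < t1" "t1 < h" "v h - v 0 = h * pd j (pd i f) (x + s1 *\<^sub>R ?a + t1 *\<^sub>R ?b)" by auto
  have "u' s1 = v h - v 0" unfolding u'_def v_def by (simp add: algebra_simps)
  have "norm (s1 *\<^sub>R ?a + t1 *\<^sub>R ?b) \<le> norm (s1 *\<^sub>R ?a) + norm (t1 *\<^sub>R ?b)" by (rule norm_triangle_ineq)
  also have "\<dots> < 2 * h" using s1 t1 by simp
  finally have dist: "dist (x + s1 *\<^sub>R ?a + t1 *\<^sub>R ?b) x < 2 * h" by (simp add: dist_norm add.assoc)
  have "f (x + h *\<^sub>R ?a + h *\<^sub>R ?b) - f (x + h *\<^sub>R ?a) - f (x + h *\<^sub>R ?b) + f x = u h - u 0"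
    unfolding u_def by (simp add: algebra_simps)
  also have "\<dots> = h * h * pd j (pd i f) (x + s1 *\<^sub>R ?a + t1 *\<^sub>R ?b)"
    using s1(3) t1(3) \<open>u' s1 = v h - v 0\<close> by simp
  finally show ?thesis using dist by blast
qed

lemma schwarz:
  fixes f :: "real^'n::finite \<Rightarrow> real"
  assumes U: "open U" and f: "Ck 2 U f" and x: "x \<in> U"
  shows "pd i (pd j f) x = pd j (pd i f) x"
proof (rule ccontr)
  assume ne: "pd i (pd j f) x \<noteq> pd j (pd i f) x"
  define F1 where "F1 = pd j (pd i f)"
  define F2 where "F2 = pd i (pd j f)"
  define e where "e = \<bar>F1 x - F2 x\<bar> / 2"
  have e: "e > 0" using ne unfolding e_def F1_def F2_def by simp
  obtain r where r: "r > 0" "ball x r \<subseteq> U" using U x open_contains_ball by blast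
  have "Ck 0 U F1" "Ck 0 U F2" using f unfolding F1_def F2_def by (simp_all add: numeral_2_eq_2)
  then have "isCont F1 x" "isCont F2 x" using U x continuous_on_eq_continuous_at by auto
  then obtain d1 d2 where d: "d1 > 0" "\<And>y. dist y x < d1 \<Longrightarrow> dist (F1 y) (F1 x) < e"
     "d2 > 0" "\<And>y. dist y x < d2 \<Longrightarrow> dist (F2 y) (F2 x) < e"
    using e unfolding continuous_at_eps_delta by metis
  define h where "h = min r (min d1 d2) / 4"
  have h: "0 < h" "2 * h < r" "2 * h < d1" "2 * h < d2" using r d unfolding h_def by auto
  obtain p where p: "dist p x < 2 * h"
    "f (x + h *\<^sub>R axis i 1 + h *\<^sub>R axis j 1) - f (x + h *\<^sub>R axis i 1) - f (x + h *\<^sub>R axis j 1) + f x = h * h * F1 p"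
    using second_diff[OF r(2) f h(1,2), of i j] unfolding F1_def by blast
  obtain q where q: "dist q x < 2 * h"
    "f (x + h *\<^sub>R axis j 1 + h *\<^sub>R axis i 1) - f (x + h *\<^sub>R axis j 1) - f (x + h *\<^sub>R axis i 1) + f x = h * h * F2 q"
    using second_diff[OF r(2) f h(1,2), of j i] unfolding F2_def by blast
  have "h * h * F1 p = h * h * F2 q" using p(2) q(2) by (simp add: algebra_simps)
  then have pq: "F1 p = F2 q" using h by simp
  have "dist (F1 p) (F1 x) < e" "dist (F2 q) (F2 x) < e" using d p(1) q(1) h by auto
  then have "\<bar>F1 x - F2 x\<bar> < 2 * e" using pq by (simp add: dist_real_def)
  then show False unfolding e_def by simp
qed

lemma sm_const: fixes U :: "(real^'n::finite) set" shows "coord_smooth U (\<lambda>y. c)"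
  unfolding coord_smooth_def using Ck_const by blast
lemma sm_add: "open U \<Longrightarrow> coord_smooth U f \<Longrightarrow> coord_smooth U h \<Longrightarrow> coord_smooth U (\<lambda>y. f y + h y)"
  unfolding coord_smooth_def using Ck_add by blast
lemma sm_diff: "open U \<Longrightarrow> coord_smooth U f \<Longrightarrow> coord_smooth U h \<Longrightarrow> coord_smooth U (\<lambda>y. f y - h y)"
  unfolding coord_smooth_def using Ck_diff by blast
lemma sm_mult: "open U \<Longrightarrow> coord_smooth U f \<Longrightarrow> coord_smooth U h \<Longrightarrow> coord_smooth U (\<lambda>y. f y * h y)"
  unfolding coord_smooth_def using Ck_mult by blast
lemma sm_sum: "open U \<Longrightarrow> finite A \<Longrightarrow> (\<And>a. a \<in> A \<Longrightarrow> coord_smooth U (f a)) \<Longrightarrow> coord_smooth U (\<lambda>y. \<Sum>a\<in>A. f a y)"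
  unfolding coord_smooth_def using Ck_sum by blast
lemma sm_prod: "open U \<Longrightarrow> finite A \<Longrightarrow> (\<And>a. a \<in> A \<Longrightarrow> coord_smooth U (f a)) \<Longrightarrow> coord_smooth U (\<lambda>y. \<Prod>a\<in>A. f a y)"
  unfolding coord_smooth_def using Ck_prod by blast
lemma sm_inverse: "open U \<Longrightarrow> coord_smooth U f \<Longrightarrow> (\<And>y. y \<in> U \<Longrightarrow> f y \<noteq> 0) \<Longrightarrow> coord_smooth U (\<lambda>y. inverse (f y))"
  unfolding coord_smooth_def using Ck_inverse by blast
lemma sm_cong: "open U \<Longrightarrow> (\<And>y. y \<in> U \<Longrightarrow> f y = h y) \<Longrightarrow> coord_smooth U f \<Longrightarrow> coord_smooth U h"
  unfolding coord_smooth_def using Ck_cong by blast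
lemma sm_pd: "coord_smooth U f \<Longrightarrow> coord_smooth U (pd i f)"
  unfolding coord_smooth_def using Ck.simps(2) by blast
lemma sm_differentiable: "coord_smooth U f \<Longrightarrow> y \<in> U \<Longrightarrow> f differentiable (at y)"
  unfolding coord_smooth_def using Ck.simps(2) by blast
lemma sm_schwarz: "open U \<Longrightarrow> coord_smooth U f \<Longrightarrow> y \<in> U \<Longrightarrow> pd i (pd j f) y = pd j (pd i f) y"
  unfolding coord_smooth_def using schwarz by blast




lemma det_sm:
  fixes M :: "'n::finite \<Rightarrow> 'n \<Rightarrow> real^'n \<Rightarrow> real"
  assumes U: "open U" and M: "\<And>r c. coord_smooth U (M r c)"
  shows "coord_smooth U (\<lambda>y. det (\<chi> r c. M r c y))"
proof -
  have e: "(\<lambda>y. det (\<chi> r c. M r c y)) = (\<lambda>y. \<Sum>p\<in>{p. p permutes (UNIV::'n set)}. of_int (sign p) * (\<Prod>i\<in>UNIV. M i (p i) y))"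
    unfolding det_def by simp
  show ?thesis unfolding e
    by (intro sm_sum[OF U] sm_mult[OF U] sm_const sm_prod[OF U] finite_permutations finite) (rule M)
qed

lemma sm_if: "coord_smooth U f \<Longrightarrow> coord_smooth U h \<Longrightarrow> coord_smooth U (\<lambda>y. if P then f y else h y)"
  by (cases P) auto

locale geo =
  fixes U :: "(real^'n::finite) set" and g :: "'n t02" and \<xi> :: "'n vf"
  assumes U: "open U" and met: "semi_riem_metric U g" and xi: "\<And>i. coord_smooth U (\<xi> i)"
begin

abbreviation sm where "sm f \<equiv> coord_smooth U f"

lemma g_sm: "sm (g a b)" using met unfolding semi_riem_metric_def by blast

lemma g_sym: "g a b = g b a" using met unfolding semi_riem_metric_def by (auto simp: fun_eq_iff)

lemma g_det: "y \<in> U \<Longrightarrow> det (\<chi> i j. g i j y) \<noteq> 0" using met unfolding semi_riem_metric_def by blast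

lemma ginv_inv:
  assumes y: "y \<in> U"
  shows "(\<chi> i j. g i j y) ** matrix_inv (\<chi> i j. g i j y) = mat 1 \<and> matrix_inv (\<chi> i j. g i j y) ** (\<chi> i j. g i j y) = mat 1"
proof -
  have "invertible (\<chi> i j. g i j y)" using g_det[OF y] invertible_det_nz by blast
  then show ?thesis unfolding matrix_inv_def invertible_def by (rule someI_ex)
qed

lemma ginv_left: "y \<in> U \<Longrightarrow> (\<Sum>c\<in>UNIV. ginv g a c y * g c b y) = (if a = b then 1 else 0)"
  using ginv_inv[of y] unfolding ginv_def
  by (auto simp: vec_eq_iff matrix_matrix_mult_def mat_def)

lemma ginv_right: "y \<in> U \<Longrightarrow> (\<Sum>c\<in>UNIV. g a c y * ginv g c b y) = (if a = b then 1 else 0)"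
  using ginv_inv[of y] unfolding ginv_def
  by (auto simp: vec_eq_iff matrix_matrix_mult_def mat_def)

lemma ginv_cramer:
  assumes y: "y \<in> U"
  shows "ginv g k j y = det (\<chi> r c. if c = k then (if r = j then 1 else 0) else g r c y) / det (\<chi> a b. g a b y)"
proof -
  let ?A = "(\<chi> a b. g a b y)" and ?v = "(\<chi> k. ginv g k j y)" and ?b = "(\<chi> r. if r = j then 1 else (0::real))"
  have "?A *v ?v = ?b"
    using ginv_right[OF y] by (simp add: vec_eq_iff matrix_vector_mult_def)
  then have "?v = (\<chi> k. det(\<chi> r c. if c=k then ?b$r else ?A$r$c) / det ?A)"
    using cramer[OF g_det[OF y]] by blast
  then have "?v $ k = (\<chi> k. det(\<chi> r c. if c=k then ?b$r else ?A$r$c) / det ?A) $ k" by simp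
  moreover have "(\<chi> r c. if c=k then ?b$r else ?A$r$c) = (\<chi> r c. if c = k then (if r = j then 1 else 0) else g r c y)"
    by (simp add: vec_eq_iff)
  ultimately show ?thesis by simp
qed

lemma ginv_sm: "sm (ginv g k j)"
proof -
  have "sm (\<lambda>y. det (\<chi> r c. if c = k then (if r = j then 1 else 0) else g r c y) * inverse (det (\<chi> a b. g a b y)))"
    by (intro sm_mult[OF U] det_sm[OF U] sm_inverse[OF U]) (auto simp: g_sm sm_const g_det intro!: sm_if)
  then show ?thesis by (rule sm_cong[OF U, rotated]) (simp add: ginv_cramer divide_inverse)
qed

end



definition Dv :: "'n::finite t12 \<Rightarrow> 'n t13" where "Dv S \<mu> \<alpha> \<nu> \<beta> = pd \<nu> (S \<mu> \<alpha> \<beta>)"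
definition C1 :: "'n::finite t12 \<Rightarrow> 'n t12 \<Rightarrow> 'n t13" where
  "C1 A B \<mu> \<alpha> \<nu> \<beta> x = (\<Sum>d\<in>UNIV. A \<mu> \<nu> d x * B d \<alpha> \<beta> x)"
definition C2 :: "'n::finite t12 \<Rightarrow> 'n t12 \<Rightarrow> 'n t13" where
  "C2 A B \<mu> \<alpha> \<nu> \<beta> x = (\<Sum>d\<in>UNIV. A d \<nu> \<alpha> x * B \<mu> d \<beta> x)"
definition C3 :: "'n::finite t12 \<Rightarrow> 'n t12 \<Rightarrow> 'n t13" where
  "C3 A B \<mu> \<alpha> \<nu> \<beta> x = (\<Sum>d\<in>UNIV. A d \<nu> \<beta> x * B \<mu> \<alpha> d x)"
definition C4 :: "'n::finite t12 \<Rightarrow> 'n t12 \<Rightarrow> 'n t13" where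
  "C4 A B \<mu> \<alpha> \<nu> \<beta> x = (\<Sum>d\<in>UNIV. A d \<alpha> \<beta> x * B \<mu> d \<nu> x)"
definition Pxi :: "'n::finite vf \<Rightarrow> 'n t12" where "Pxi \<xi> a b c = pd b (pd c (\<xi> a))"

context geo begin

lemma sm_addS[simp]: "sm f \<Longrightarrow> sm h \<Longrightarrow> sm (\<lambda>y. f y + h y)" using sm_add[OF U] .
lemma sm_diffS[simp]: "sm f \<Longrightarrow> sm h \<Longrightarrow> sm (\<lambda>y. f y - h y)" using sm_diff[OF U] .
lemma sm_multS[simp]: "sm f \<Longrightarrow> sm h \<Longrightarrow> sm (\<lambda>y. f y * h y)" using sm_mult[OF U] .
lemma sm_sumS[simp]: "finite A \<Longrightarrow> (\<And>a. a \<in> A \<Longrightarrow> sm (f a)) \<Longrightarrow> sm (\<lambda>y. \<Sum>a\<in>A. f a y)" using sm_sum[OF U] .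
lemma sm_constS[simp]: "sm (\<lambda>y. c)" by (rule sm_const)
lemma sm_pdS[simp]: "sm f \<Longrightarrow> sm (pd i f)" by (rule sm_pd)
lemma xi_sm[simp]: "sm (\<xi> i)" by (rule xi)
declare g_sm[simp] ginv_sm[simp]

lemma sm_dS[simp]: "sm f \<Longrightarrow> x \<in> U \<Longrightarrow> f differentiable (at x)" by (rule sm_differentiable)

lemma schwarzS: "sm f \<Longrightarrow> x \<in> U \<Longrightarrow> pd i (pd j f) x = pd j (pd i f) x" by (rule sm_schwarz[OF U])

lemmas pdS = pd_add pd_diff pd_mult pd_sum pd_const

definition "sm12 T \<longleftrightarrow> (\<forall>a b c. sm (T a b c))"
definition "sm13 T \<longleftrightarrow> (\<forall>a b c e. sm (T a b c e))"
definition "sm02 T \<longleftrightarrow> (\<forall>a b. sm (T a b))"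

lemma sm12D[simp]: "sm12 T \<Longrightarrow> sm (T a b c)" unfolding sm12_def by blast
lemma sm13D[simp]: "sm13 T \<Longrightarrow> sm (T a b c e)" unfolding sm13_def by blast
lemma sm02D[simp]: "sm02 T \<Longrightarrow> sm (T a b)" unfolding sm02_def by blast

lemma lie12_sm[simp]: "sm12 T \<Longrightarrow> sm12 (lie12 \<xi> T)"
  unfolding sm12_def lie12_def[abs_def] by simp
lemma lie13_sm[simp]: "sm13 T \<Longrightarrow> sm13 (lie13 \<xi> T)"
  unfolding sm13_def lie13_def[abs_def] by simp
lemma lie02_sm[simp]: "sm02 T \<Longrightarrow> sm02 (lie02 \<xi> T)"
  unfolding sm02_def lie02_def[abs_def] by simp

lemma lie_Dv:
  assumes S: "sm12 S" and x: "x \<in> U"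
  shows "lie13 \<xi> (Dv S) \<mu> \<alpha> \<nu> \<beta> x = Dv (lie12 \<xi> S) \<mu> \<alpha> \<nu> \<beta> x
     + C1 (Pxi \<xi>) S \<mu> \<alpha> \<nu> \<beta> x - C2 (Pxi \<xi>) S \<mu> \<alpha> \<nu> \<beta> x - C3 (Pxi \<xi>) S \<mu> \<alpha> \<nu> \<beta> x"
  using S x
  apply (simp add: lie13_def Dv_def lie12_def[abs_def] C1_def C2_def C3_def Pxi_def pdS)
  apply (simp add: schwarzS)
  apply (simp add: sum.distrib[symmetric] sum_subtractf[symmetric])
  apply (rule sum.cong[OF refl])
  apply (simp add: algebra_simps)
  done

lemma sym_sum:
  fixes F G :: "'a \<Rightarrow> 'a \<Rightarrow> real"
  assumes "\<And>d l. F d l + F l d = G d l + G l d"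
  shows "(\<Sum>d\<in>A. \<Sum>l\<in>A. F d l) = (\<Sum>d\<in>A. \<Sum>l\<in>A. G d l)"
proof -
  have "2 * (\<Sum>d\<in>A. \<Sum>l\<in>A. F d l) = (\<Sum>d\<in>A. \<Sum>l\<in>A. F d l) + (\<Sum>l\<in>A. \<Sum>d\<in>A. F d l)"
    by (simp add: sum.swap[of F])
  also have "\<dots> = (\<Sum>d\<in>A. \<Sum>l\<in>A. F d l + F l d)" by (simp add: sum.distrib)
  also have "\<dots> = (\<Sum>d\<in>A. \<Sum>l\<in>A. G d l + G l d)" using assms by simp
  also have "\<dots> = (\<Sum>d\<in>A. \<Sum>l\<in>A. G d l) + (\<Sum>l\<in>A. \<Sum>d\<in>A. G d l)" by (simp add: sum.distrib)
  also have "\<dots> = 2 * (\<Sum>d\<in>A. \<Sum>l\<in>A. G d l)" by (simp add: sum.swap[of G])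
  finally show ?thesis by simp
qed

lemmas sumS = sum_distrib_left sum_distrib_right sum.distrib[symmetric] sum_subtractf[symmetric]

lemma lie_C1:
  assumes A: "sm12 A" and B: "sm12 B" and x: "x \<in> U"
  shows "lie13 \<xi> (C1 A B) \<mu> \<alpha> \<nu> \<beta> x = C1 (lie12 \<xi> A) B \<mu> \<alpha> \<nu> \<beta> x + C1 A (lie12 \<xi> B) \<mu> \<alpha> \<nu> \<beta> x"
  using A B x
  apply (simp add: lie13_def lie12_def C1_def[abs_def] pdS)
  apply (simp add: sumS)
  apply (rule sym_sum)
  apply (simp add: algebra_simps)
  done
lemma lie_C2:
  assumes A: "sm12 A" and B: "sm12 B" and x: "x \<in> U"
  shows "lie13 \<xi> (C2 A B) \<mu> \<alpha> \<nu> \<beta> x = C2 (lie12 \<xi> A) B \<mu> \<alpha> \<nu> \<beta> x + C2 A (lie12 \<xi> B) \<mu> \<alpha> \<nu> \<beta> x"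
  using A B x
  apply (simp add: lie13_def lie12_def C2_def[abs_def] pdS)
  apply (simp add: sumS)
  apply (rule sym_sum)
  apply (simp add: algebra_simps)
  done

lemma lie_C3:
  assumes A: "sm12 A" and B: "sm12 B" and x: "x \<in> U"
  shows "lie13 \<xi> (C3 A B) \<mu> \<alpha> \<nu> \<beta> x = C3 (lie12 \<xi> A) B \<mu> \<alpha> \<nu> \<beta> x + C3 A (lie12 \<xi> B) \<mu> \<alpha> \<nu> \<beta> x"
  using A B x
  apply (simp add: lie13_def lie12_def C3_def[abs_def] pdS)
  apply (simp add: sumS)
  apply (rule sym_sum)
  apply (simp add: algebra_simps)
  done

lemma lie_C4:
  assumes A: "sm12 A" and B: "sm12 B" and x: "x \<in> U"
  shows "lie13 \<xi> (C4 A B) \<mu> \<alpha> \<nu> \<beta> x = C4 (lie12 \<xi> A) B \<mu> \<alpha> \<nu> \<beta> x + C4 A (lie12 \<xi> B) \<mu> \<alpha> \<nu> \<beta> x"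
  using A B x
  apply (simp add: lie13_def lie12_def C4_def[abs_def] pdS)
  apply (simp add: sumS)
  apply (rule sym_sum)
  apply (simp add: algebra_simps)
  done

definition sw :: "'n t13 \<Rightarrow> 'n t13" where "sw X \<mu> \<alpha> \<nu> \<beta> = X \<mu> \<alpha> \<beta> \<nu>"

lemma sw_sm[simp]: "sm13 X \<Longrightarrow> sm13 (sw X)" unfolding sm13_def sw_def by simp

lemma lie_sw:
  assumes X: "sm13 X" and x: "x \<in> U"
  shows "lie13 \<xi> (sw X) \<mu> \<alpha> \<nu> \<beta> x = sw (lie13 \<xi> X) \<mu> \<alpha> \<nu> \<beta> x"
  using X x by (simp add: lie13_def sw_def algebra_simps)

lemma lie_add:
  assumes X: "sm13 X" and Y: "sm13 Y" and x: "x \<in> U"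
  shows "lie13 \<xi> (\<lambda>a b c e y. X a b c e y + Y a b c e y) \<mu> \<alpha> \<nu> \<beta> x = lie13 \<xi> X \<mu> \<alpha> \<nu> \<beta> x + lie13 \<xi> Y \<mu> \<alpha> \<nu> \<beta> x"
  using X Y x
  apply (simp add: lie13_def pdS)
  apply (simp add: sumS)
  apply (rule sum.cong[OF refl])
  apply (simp add: algebra_simps)
  done

lemma lie_diff:
  assumes X: "sm13 X" and Y: "sm13 Y" and x: "x \<in> U"
  shows "lie13 \<xi> (\<lambda>a b c e y. X a b c e y - Y a b c e y) \<mu> \<alpha> \<nu> \<beta> x = lie13 \<xi> X \<mu> \<alpha> \<nu> \<beta> x - lie13 \<xi> Y \<mu> \<alpha> \<nu> \<beta> x"
  using X Y x
  apply (simp add: lie13_def pdS)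
  apply (simp add: sumS)
  apply (rule sum.cong[OF refl])
  apply (simp add: algebra_simps)
  done

lemma lie_lincomb:
  assumes J: "finite J" and X: "\<And>j. j \<in> J \<Longrightarrow> sm13 (X j)" and x: "x \<in> U"
  shows "lie13 \<xi> (\<lambda>a b c e y. \<Sum>j\<in>J. w j * X j a b c e y) \<mu> \<alpha> \<nu> \<beta> x = (\<Sum>j\<in>J. w j * lie13 \<xi> (X j) \<mu> \<alpha> \<nu> \<beta> x)"
  using X x J
  apply (simp add: lie13_def pdS)
  apply (simp add: sumS)
  apply (rule trans[OF sum.swap])
  apply (rule sum.cong[OF refl])+
  apply (simp add: algebra_simps)
  done

end



definition sym12 :: "'n t12 \<Rightarrow> bool" where "sym12 S \<longleftrightarrow> (\<forall>a b c. S a b c = S a c b)"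

context geo begin

lemma schwarz3: "sm f \<Longrightarrow> x \<in> U \<Longrightarrow> pd a (pd b (pd c f)) x = pd a (pd c (pd b f)) x"
  by (rule pd_local[OF U]) (auto intro: schwarzS)

definition Wt :: "'n t12 \<Rightarrow> 'n t13" where
  "Wt S \<mu> \<alpha> \<nu> \<beta> x = cov12 g S \<nu> \<mu> \<alpha> \<beta> x - cov12 g S \<beta> \<mu> \<alpha> \<nu> x"

definition LG :: "'n t12" where "LG a b c y = lie12 \<xi> (chris g) a b c y + Pxi \<xi> a b c y"

lemma sm_divS[simp]: "sm f \<Longrightarrow> sm (\<lambda>y. f y / c)"
proof -
  assume "sm f"
  then have "sm (\<lambda>y. f y * inverse c)" by simp
  then show ?thesis by (simp add: divide_inverse)
qed

declare g_sym[simp]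

lemma chris_sm[simp]: "sm12 (chris g)"
  unfolding sm12_def chris_def[abs_def] by simp

lemma chris_sym: "chris g a b c = chris g a c b"
  unfolding chris_def[abs_def] by (simp add: algebra_simps)

lemma chris_sym12[simp]: "sym12 (chris g)" unfolding sym12_def using chris_sym by blast

lemma lie12_sym: "sym12 T \<Longrightarrow> sym12 (lie12 \<xi> T)"
  unfolding sym12_def lie12_def[abs_def] by (simp add: algebra_simps)

lemma lie12_chris_sym: "lie12 \<xi> (chris g) a b c = lie12 \<xi> (chris g) a c b"
  using lie12_sym[OF chris_sym12] unfolding sym12_def by blast

lemma Dv_sm[simp]: "sm12 S \<Longrightarrow> sm13 (Dv S)" unfolding sm13_def Dv_def by simp
lemma C1_sm[simp]: "sm12 A \<Longrightarrow> sm12 B \<Longrightarrow> sm13 (C1 A B)" unfolding sm13_def C1_def[abs_def] by simp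
lemma C2_sm[simp]: "sm12 A \<Longrightarrow> sm12 B \<Longrightarrow> sm13 (C2 A B)" unfolding sm13_def C2_def[abs_def] by simp
lemma C3_sm[simp]: "sm12 A \<Longrightarrow> sm12 B \<Longrightarrow> sm13 (C3 A B)" unfolding sm13_def C3_def[abs_def] by simp
lemma C4_sm[simp]: "sm12 A \<Longrightarrow> sm12 B \<Longrightarrow> sm13 (C4 A B)" unfolding sm13_def C4_def[abs_def] by simp
lemma Pxi_sm[simp]: "sm12 (Pxi \<xi>)" unfolding sm12_def Pxi_def by simp
lemma add13_sm[simp]: "sm13 X \<Longrightarrow> sm13 Y \<Longrightarrow> sm13 (\<lambda>a b c e y. X a b c e y + Y a b c e y)"
  unfolding sm13_def by simp
lemma diff13_sm[simp]: "sm13 X \<Longrightarrow> sm13 Y \<Longrightarrow> sm13 (\<lambda>a b c e y. X a b c e y - Y a b c e y)"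
  unfolding sm13_def by simp

lemma riem_decomp:
  "riem g = (\<lambda>\<mu> \<alpha> \<nu> \<beta> y. (Dv (chris g) \<mu> \<alpha> \<nu> \<beta> y + C1 (chris g) (chris g) \<mu> \<alpha> \<nu> \<beta> y)
       - (Dv (chris g) \<mu> \<alpha> \<beta> \<nu> y + C1 (chris g) (chris g) \<mu> \<alpha> \<beta> \<nu> y))"
  unfolding riem_def[abs_def] Dv_def C1_def by (simp add: chris_sym algebra_simps)

lemma riem_sm[simp]: "sm13 (riem g)"
  unfolding sm13_def riem_def[abs_def] by simp

lemma lie_riem:
  assumes x: "x \<in> U"
  shows "lie13 \<xi> (riem g) \<mu> \<alpha> \<nu> \<beta> x = Wt LG \<mu> \<alpha> \<nu> \<beta> x"
proof -
  define E0 where "E0 = (\<lambda>\<mu> \<alpha> \<nu> \<beta> y. Dv (chris g) \<mu> \<alpha> \<nu> \<beta> y + C1 (chris g) (chris g) \<mu> \<alpha> \<nu> \<beta> y)"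
  have E0: "sm13 E0" unfolding E0_def by simp
  have r: "riem g = (\<lambda>\<mu> \<alpha> \<nu> \<beta> y. E0 \<mu> \<alpha> \<nu> \<beta> y - sw E0 \<mu> \<alpha> \<nu> \<beta> y)"
    unfolding riem_decomp E0_def sw_def ..
  have l0: "lie13 \<xi> E0 \<mu> \<alpha> \<nu> \<beta> x = Dv (lie12 \<xi> (chris g)) \<mu> \<alpha> \<nu> \<beta> x
     + C1 (Pxi \<xi>) (chris g) \<mu> \<alpha> \<nu> \<beta> x - C2 (Pxi \<xi>) (chris g) \<mu> \<alpha> \<nu> \<beta> x - C3 (Pxi \<xi>) (chris g) \<mu> \<alpha> \<nu> \<beta> x
     + (C1 (lie12 \<xi> (chris g)) (chris g) \<mu> \<alpha> \<nu> \<beta> x + C1 (chris g) (lie12 \<xi> (chris g)) \<mu> \<alpha> \<nu> \<beta> x)"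
    for \<mu> \<alpha> \<nu> \<beta>
    unfolding E0_def using x by (simp add: lie_add lie_Dv lie_C1)
  have "lie13 \<xi> (riem g) \<mu> \<alpha> \<nu> \<beta> x = lie13 \<xi> E0 \<mu> \<alpha> \<nu> \<beta> x - lie13 \<xi> E0 \<mu> \<alpha> \<beta> \<nu> x"
    unfolding r using x E0 by (simp add: lie_diff lie_sw) (simp add: sw_def)
  also have "\<dots> = Wt LG \<mu> \<alpha> \<nu> \<beta> x"
    unfolding l0 using x
    apply (simp add: Wt_def cov12_def LG_def[abs_def] Dv_def C1_def C2_def C3_def Pxi_def pdS)
    apply (simp add: schwarzS schwarz3 chris_sym lie12_chris_sym)
    apply (simp add: sum.distrib sum_subtractf sum_distrib_left sum_distrib_right sum_negf algebra_simps)
    done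
  finally show ?thesis .
qed

definition PP :: "'n t12 \<Rightarrow> 'n t12 \<Rightarrow> 'n t13" where
  "PP A B \<mu> \<alpha> \<nu> \<beta> x = C4 A B \<mu> \<alpha> \<nu> \<beta> x - C4 A B \<mu> \<alpha> \<beta> \<nu> x"

lemma lie_Wt:
  assumes S: "sm12 S" and sy: "sym12 S" and x: "x \<in> U"
  shows "lie13 \<xi> (Wt S) \<mu> \<alpha> \<nu> \<beta> x = Wt (lie12 \<xi> S) \<mu> \<alpha> \<nu> \<beta> x + PP S LG \<mu> \<alpha> \<nu> \<beta> x + PP LG S \<mu> \<alpha> \<nu> \<beta> x"
proof -
  have s1: "S a b c = S a c b" for a b c using sy unfolding sym12_def by blast
  have s2: "lie12 \<xi> S a b c = lie12 \<xi> S a c b" for a b c using lie12_sym[OF sy] unfolding sym12_def by blast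
  define E where "E = (\<lambda>\<mu> \<alpha> \<nu> \<beta> y. Dv S \<mu> \<alpha> \<nu> \<beta> y + C1 (chris g) S \<mu> \<alpha> \<nu> \<beta> y - C2 (chris g) S \<mu> \<alpha> \<nu> \<beta> y - C3 (chris g) S \<mu> \<alpha> \<nu> \<beta> y)"
  have E: "sm13 E" unfolding E_def using S by simp
  have r: "Wt S = (\<lambda>\<mu> \<alpha> \<nu> \<beta> y. E \<mu> \<alpha> \<nu> \<beta> y - sw E \<mu> \<alpha> \<nu> \<beta> y)"
    unfolding E_def sw_def by (simp add: fun_eq_iff Wt_def cov12_def Dv_def C1_def C2_def C3_def)
  have l0: "lie13 \<xi> E \<mu> \<alpha> \<nu> \<beta> x = Dv (lie12 \<xi> S) \<mu> \<alpha> \<nu> \<beta> x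
     + C1 (Pxi \<xi>) S \<mu> \<alpha> \<nu> \<beta> x - C2 (Pxi \<xi>) S \<mu> \<alpha> \<nu> \<beta> x - C3 (Pxi \<xi>) S \<mu> \<alpha> \<nu> \<beta> x
     + (C1 (lie12 \<xi> (chris g)) S \<mu> \<alpha> \<nu> \<beta> x + C1 (chris g) (lie12 \<xi> S) \<mu> \<alpha> \<nu> \<beta> x)
     - (C2 (lie12 \<xi> (chris g)) S \<mu> \<alpha> \<nu> \<beta> x + C2 (chris g) (lie12 \<xi> S) \<mu> \<alpha> \<nu> \<beta> x)
     - (C3 (lie12 \<xi> (chris g)) S \<mu> \<alpha> \<nu> \<beta> x + C3 (chris g) (lie12 \<xi> S) \<mu> \<alpha> \<nu> \<beta> x)"
    for \<mu> \<alpha> \<nu> \<beta>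
    unfolding E_def using x S by (simp add: lie_add lie_diff lie_Dv lie_C1 lie_C2 lie_C3)
  have "lie13 \<xi> (Wt S) \<mu> \<alpha> \<nu> \<beta> x = lie13 \<xi> E \<mu> \<alpha> \<nu> \<beta> x - lie13 \<xi> E \<mu> \<alpha> \<beta> \<nu> x"
    unfolding r using x E by (simp add: lie_diff lie_sw) (simp add: sw_def)
  also have "\<dots> = Wt (lie12 \<xi> S) \<mu> \<alpha> \<nu> \<beta> x + PP S LG \<mu> \<alpha> \<nu> \<beta> x + PP LG S \<mu> \<alpha> \<nu> \<beta> x"
    unfolding l0 using x
    apply (simp add: Wt_def PP_def cov12_def LG_def Dv_def C1_def C2_def C3_def C4_def Pxi_def)
    apply (simp add: schwarzS chris_sym lie12_chris_sym s1 s2)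
    apply (simp add: sum.distrib sum_subtractf sum_distrib_left sum_distrib_right sum_negf algebra_simps)
    done
  finally show ?thesis .
qed

lemma PP_sm[simp]: "sm12 A \<Longrightarrow> sm12 B \<Longrightarrow> sm13 (PP A B)"
  unfolding sm13_def PP_def[abs_def] C4_def by simp

lemma lie_PP:
  assumes A: "sm12 A" and B: "sm12 B" and x: "x \<in> U"
  shows "lie13 \<xi> (PP A B) \<mu> \<alpha> \<nu> \<beta> x = PP (lie12 \<xi> A) B \<mu> \<alpha> \<nu> \<beta> x + PP A (lie12 \<xi> B) \<mu> \<alpha> \<nu> \<beta> x"
proof -
  have r: "PP A B = (\<lambda>\<mu> \<alpha> \<nu> \<beta> y. C4 A B \<mu> \<alpha> \<nu> \<beta> y - sw (C4 A B) \<mu> \<alpha> \<nu> \<beta> y)"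
    unfolding sw_def by (simp add: fun_eq_iff PP_def)
  show ?thesis unfolding r using A B x
    by (simp add: lie_diff lie_sw lie_C4) (simp add: sw_def PP_def lie_C4)
qed

lemma lie13_local:
  assumes "\<And>a b c e y. y \<in> U \<Longrightarrow> X a b c e y = Y a b c e y" and x: "x \<in> U"
  shows "lie13 \<xi> X \<mu> \<alpha> \<nu> \<beta> x = lie13 \<xi> Y \<mu> \<alpha> \<nu> \<beta> x"
proof -
  have "pd i (X a b c e) x = pd i (Y a b c e) x" for i a b c e
    by (rule pd_local[OF U x]) (rule assms(1))
  then show ?thesis unfolding lie13_def using assms by simp
qed

lemma Wt_local:
  assumes "\<And>a b c y. y \<in> U \<Longrightarrow> S a b c y = S' a b c y" and x: "x \<in> U"
  shows "Wt S \<mu> \<alpha> \<nu> \<beta> x = Wt S' \<mu> \<alpha> \<nu> \<beta> x"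
proof -
  have "pd i (S a b c) x = pd i (S' a b c) x" for i a b c
    by (rule pd_local[OF U x]) (rule assms(1))
  then show ?thesis unfolding Wt_def cov12_def using assms by simp
qed

end



context geo begin

abbreviation "K \<equiv> Kdef \<xi> g"

lemma K_sm[simp]: "sm02 K" unfolding Kdef_def sm02_def lie02_def[abs_def] by simp
lemma K_sym: "Kdef \<xi> g a b = Kdef \<xi> g b a"
  unfolding Kdef_def lie02_def[abs_def] by (simp add: algebra_simps)

lemma ifmult: "(if P then 1 else 0) * (z::real) = (if P then z else 0)" by simp

definition Gl2 :: "'n \<Rightarrow> 'n \<Rightarrow> 'n \<Rightarrow> real^'n \<Rightarrow> real" where
  "Gl2 d b c y = pd b (g c d) y + pd c (g b d) y - pd d (g b c) y"

lemma chris_Gl: "chris g a b c y = (1/2) * (\<Sum>e\<in>UNIV. ginv g a e y * Gl2 e b c y)"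
  unfolding chris_def Gl2_def by simp

lemma gG:
  assumes y: "y \<in> U"
  shows "(\<Sum>a\<in>UNIV. g d a y * chris g a b c y) = Gl2 d b c y / 2"
proof -
  have "(\<Sum>a\<in>UNIV. g d a y * chris g a b c y)
      = (1/2) * (\<Sum>a\<in>UNIV. \<Sum>e\<in>UNIV. g d a y * ginv g a e y * Gl2 e b c y)"
    unfolding chris_Gl by (simp add: sum_distrib_left mult.assoc mult.left_commute)
  also have "\<dots> = (1/2) * (\<Sum>e\<in>UNIV. \<Sum>a\<in>UNIV. g d a y * ginv g a e y * Gl2 e b c y)"
    by (subst sum.swap) simp
  also have "\<dots> = (1/2) * (\<Sum>e\<in>UNIV. (\<Sum>a\<in>UNIV. g d a y * ginv g a e y) * Gl2 e b c y)"
    by (simp add: sum_distrib_right)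
  also have "\<dots> = Gl2 d b c y / 2"
    unfolding ginv_right[OF y] by (simp add: ifmult)
  finally show ?thesis .
qed

lemma step_d:
  assumes x: "x \<in> U"
  shows "cov02 g K b c d x + cov02 g K c b d x - cov02 g K d b c x
     = pd b (K c d) x + pd c (K b d) x - pd d (K b c) x - 2 * (\<Sum>e\<in>UNIV. chris g e b c x * K e d x)"
  unfolding cov02_def
  by (simp add: chris_sym K_sym sum.distrib sum_subtractf sum_negf algebra_simps)

lemma step_e:
  assumes x: "x \<in> U"
  shows "pd b (K c d) x + pd c (K b d) x - pd d (K b c) x
    = (\<Sum>e\<in>UNIV. \<xi> e x * pd e (Gl2 d b c) x) + (\<Sum>e\<in>UNIV. Gl2 e b c x * pd d (\<xi> e) x)
      + (\<Sum>e\<in>UNIV. Gl2 d e c x * pd b (\<xi> e) x) + (\<Sum>e\<in>UNIV. Gl2 d b e x * pd c (\<xi> e) x)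
      + 2 * (\<Sum>e\<in>UNIV. g e d x * pd b (pd c (\<xi> e)) x)"
  using x
  apply (simp add: Kdef_def lie02_def[abs_def] Gl2_def[abs_def] pdS)
  apply (simp add: schwarzS)
  apply (simp add: sum.distrib sum_subtractf sum_negf algebra_simps)
  done

lemma Gl2_eq: "y \<in> U \<Longrightarrow> Gl2 d b c y = 2 * (\<Sum>a\<in>UNIV. g d a y * chris g a b c y)"
  using gG[of y d b c] by simp

lemma step_f:
  assumes x: "x \<in> U"
  shows "(\<Sum>e\<in>UNIV. \<xi> e x * pd e (Gl2 d b c) x) + (\<Sum>e\<in>UNIV. Gl2 e b c x * pd d (\<xi> e) x)
      + (\<Sum>e\<in>UNIV. Gl2 d e c x * pd b (\<xi> e) x) + (\<Sum>e\<in>UNIV. Gl2 d b e x * pd c (\<xi> e) x)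
    = 2 * ((\<Sum>a\<in>UNIV. K d a x * chris g a b c x) + (\<Sum>a\<in>UNIV. g d a x * lie12 \<xi> (chris g) a b c x))"
proof -
  have p: "pd e (Gl2 d b c) x = pd e (\<lambda>y. 2 * (\<Sum>a\<in>UNIV. g d a y * chris g a b c y)) x" for e
    by (rule pd_local[OF U x]) (rule Gl2_eq)
  show ?thesis
    unfolding p Gl2_eq[OF x] using x
    apply (simp add: Kdef_def lie02_def lie12_def pdS)
    apply (simp add: sumS)
    apply (rule sym_sum)
    apply (simp add: algebra_simps chris_sym)
    done
qed

lemma half_cov:
  assumes x: "x \<in> U"
  shows "cov02 g K b c d x + cov02 g K c b d x - cov02 g K d b c x = 2 * (\<Sum>e\<in>UNIV. g d e x * LG e b c x)"
  unfolding step_d[OF x] step_e[OF x] step_f[OF x] LG_def Pxi_def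
  by (simp add: K_sym sum.distrib sum_subtractf sum_negf sum_distrib_left algebra_simps)

lemma Sigma1_LG:
  assumes x: "x \<in> U"
  shows "Sigma1 \<xi> g a b c x = LG a b c x"
proof -
  have "Sigma1 \<xi> g a b c x = (\<Sum>d\<in>UNIV. \<Sum>e\<in>UNIV. ginv g a d x * g d e x * LG e b c x)"
    unfolding Sigma1_def half_cov[OF x] by (simp add: sum_distrib_left mult.assoc)
  also have "\<dots> = (\<Sum>e\<in>UNIV. (\<Sum>d\<in>UNIV. ginv g a d x * g d e x) * LG e b c x)"
    by (subst sum.swap) (simp add: sum_distrib_right)
  also have "\<dots> = LG a b c x"
    unfolding ginv_left[OF x] by (simp add: ifmult)
  finally show ?thesis .
qed

end



lemma binom_comb:
  fixes f :: "nat \<Rightarrow> nat \<Rightarrow> real"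
  shows "(\<Sum>j\<in>{1..n}. real (Suc n choose j) * (f (Suc (Suc n - j)) j + f (Suc n - j) (Suc j)))
         + f (Suc n) 1 + f 1 (Suc n)
       = (\<Sum>j\<in>{1..Suc n}. real (Suc (Suc n) choose j) * f (Suc (Suc n) - j) j)"
proof -
  have R: "(\<Sum>j\<in>{1..Suc n}. real (Suc (Suc n) choose j) * f (Suc (Suc n) - j) j)
      = (\<Sum>i\<in>{0..n}. real (Suc n choose i) * f (Suc n - i) (Suc i))
      + (\<Sum>i\<in>{0..n}. real (Suc n choose Suc i) * f (Suc n - i) (Suc i))"
  proof -
    have "(\<Sum>j\<in>{1..Suc n}. real (Suc (Suc n) choose j) * f (Suc (Suc n) - j) j)
        = (\<Sum>i\<in>{0..n}. real (Suc (Suc n) choose Suc i) * f (Suc (Suc n) - Suc i) (Suc i))"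
      using sum.shift_bounds_cl_Suc_ivl[of "\<lambda>j. real (Suc (Suc n) choose j) * f (Suc (Suc n) - j) j" 0 n]
      by simp
    also have "\<dots> = (\<Sum>i\<in>{0..n}. real (Suc n choose i) * f (Suc n - i) (Suc i) + real (Suc n choose Suc i) * f (Suc n - i) (Suc i))"
      by (rule sum.cong[OF refl]) (simp only: binomial_Suc_Suc of_nat_add diff_Suc_Suc distrib_right)
    finally show ?thesis by (simp only: sum.distrib)
  qed
  have A: "(\<Sum>i\<in>{0..n}. real (Suc n choose i) * f (Suc n - i) (Suc i))
      = f (Suc n) 1 + (\<Sum>i\<in>{1..n}. real (Suc n choose i) * f (Suc n - i) (Suc i))"
    by (simp add: sum.atLeast_Suc_atMost[of 0 n])
  have B: "(\<Sum>i\<in>{0..n}. real (Suc n choose Suc i) * f (Suc n - i) (Suc i))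
      = (\<Sum>j\<in>{1..Suc n}. real (Suc n choose j) * f (Suc (Suc n) - j) j)"
    using sum.shift_bounds_cl_Suc_ivl[of "\<lambda>j. real (Suc n choose j) * f (Suc (Suc n) - j) j" 0 n]
    by simp
  have C: "(\<Sum>j\<in>{1..Suc n}. real (Suc n choose j) * f (Suc (Suc n) - j) j)
      = (\<Sum>j\<in>{1..n}. real (Suc n choose j) * f (Suc (Suc n) - j) j) + f 1 (Suc n)"
    by simp
  show ?thesis unfolding R A B C
    by (simp add: sum.distrib algebra_simps Suc_diff_le)
qed

context geo begin

abbreviation "Sg k \<equiv> SigmaK k \<xi> g"

lemma Sigma1_sm[simp]: "sm12 (Sigma1 \<xi> g)"
  unfolding sm12_def Sigma1_def[abs_def] cov02_def by simp

lemma Sigma1_sym[simp]: "sym12 (Sigma1 \<xi> g)"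
  unfolding sym12_def Sigma1_def[abs_def] cov02_def by (simp add: K_sym chris_sym algebra_simps)

lemma Sg_Suc: "k \<ge> 1 \<Longrightarrow> Sg (Suc k) = lie12 \<xi> (Sg k)"
  unfolding SigmaK_def by (cases k) auto

lemma Sg_1: "Sg 1 = Sigma1 \<xi> g" unfolding SigmaK_def by simp

lemma pow_sm: "sm12 ((lie12 \<xi> ^^ n) (Sigma1 \<xi> g))"
  by (induction n) auto

lemma pow_sym: "sym12 ((lie12 \<xi> ^^ n) (Sigma1 \<xi> g))"
  by (induction n) (auto intro: lie12_sym)

lemma Sg_sm[simp]: "sm12 (Sg k)" unfolding SigmaK_def by (rule pow_sm)
lemma Sg_sym[simp]: "sym12 (Sg k)" unfolding SigmaK_def by (rule pow_sym)

lemma Wt_sm[simp]: "sm12 S \<Longrightarrow> sm13 (Wt S)"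
  unfolding sm13_def Wt_def[abs_def] cov12_def by simp

definition RH :: "nat \<Rightarrow> 'n t13" where
  "RH m \<mu> \<alpha> \<nu> \<beta> y = Wt (Sg m) \<mu> \<alpha> \<nu> \<beta> y
     + (\<Sum>j\<in>{1..m-1}. real (m choose j) * PP (Sg (m-j)) (Sg j) \<mu> \<alpha> \<nu> \<beta> y)"

lemma riem_pow_sm[simp]: "sm13 ((lie13 \<xi> ^^ m) (riem g))"
  by (induction m) auto

lemma PP_LG: "x \<in> U \<Longrightarrow> PP A LG \<mu> \<alpha> \<nu> \<beta> x = PP A (Sg 1) \<mu> \<alpha> \<nu> \<beta> x"
  "x \<in> U \<Longrightarrow> PP LG A \<mu> \<alpha> \<nu> \<beta> x = PP (Sg 1) A \<mu> \<alpha> \<nu> \<beta> x"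
  unfolding PP_def C4_def Sg_1 by (simp_all add: Sigma1_LG)

lemma main_riem:
  assumes m: "m \<ge> 1" and x: "x \<in> U"
  shows "(lie13 \<xi> ^^ m) (riem g) \<mu> \<alpha> \<nu> \<beta> x = RH m \<mu> \<alpha> \<nu> \<beta> x"
  using m x
proof (induction m arbitrary: x \<mu> \<alpha> \<nu> \<beta> rule: nat_induct_at_least)
  case base
  have "lie13 \<xi> (riem g) \<mu> \<alpha> \<nu> \<beta> x = Wt LG \<mu> \<alpha> \<nu> \<beta> x" by (rule lie_riem[OF base])
  also have "\<dots> = Wt (Sg 1) \<mu> \<alpha> \<nu> \<beta> x" unfolding Sg_1
    by (rule Wt_local[OF _ base]) (simp add: Sigma1_LG)
  finally show ?case unfolding RH_def by simp
next
  case (Suc m)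
  have sRH: "sm13 (\<lambda>\<mu> \<alpha> \<nu> \<beta> y. \<Sum>j\<in>{1..m-1}. real (m choose j) * PP (Sg (m-j)) (Sg j) \<mu> \<alpha> \<nu> \<beta> y)"
    unfolding sm13_def by simp
  have "(lie13 \<xi> ^^ Suc m) (riem g) \<mu> \<alpha> \<nu> \<beta> x = lie13 \<xi> ((lie13 \<xi> ^^ m) (riem g)) \<mu> \<alpha> \<nu> \<beta> x"
    by simp
  also have "\<dots> = lie13 \<xi> (RH m) \<mu> \<alpha> \<nu> \<beta> x"
    by (rule lie13_local[OF _ Suc.prems]) (rule Suc.IH)
  also have "\<dots> = lie13 \<xi> (Wt (Sg m)) \<mu> \<alpha> \<nu> \<beta> x
      + (\<Sum>j\<in>{1..m-1}. real (m choose j) * lie13 \<xi> (PP (Sg (m-j)) (Sg j)) \<mu> \<alpha> \<nu> \<beta> x)"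
    unfolding RH_def[abs_def] using Suc.prems sRH
    by (simp add: lie_add lie_lincomb)
  also have "\<dots> = Wt (Sg (Suc m)) \<mu> \<alpha> \<nu> \<beta> x + PP (Sg m) (Sg 1) \<mu> \<alpha> \<nu> \<beta> x + PP (Sg 1) (Sg m) \<mu> \<alpha> \<nu> \<beta> x
      + (\<Sum>j\<in>{1..m-1}. real (m choose j) * (PP (Sg (Suc (m-j))) (Sg j) \<mu> \<alpha> \<nu> \<beta> x + PP (Sg (m-j)) (Sg (Suc j)) \<mu> \<alpha> \<nu> \<beta> x))"
  proof -
    have "j \<in> {1..m-1} \<Longrightarrow> lie13 \<xi> (PP (Sg (m-j)) (Sg j)) \<mu> \<alpha> \<nu> \<beta> x
       = PP (Sg (Suc (m-j))) (Sg j) \<mu> \<alpha> \<nu> \<beta> x + PP (Sg (m-j)) (Sg (Suc j)) \<mu> \<alpha> \<nu> \<beta> x" for j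
    proof -
      assume j: "j \<in> {1..m-1}"
      then have "1 \<le> m - j" "1 \<le> j" using Suc.hyps by auto
      then show ?thesis using Suc.prems by (simp add: lie_PP Sg_Suc)
    qed
    then show ?thesis
      using Suc.prems Suc.hyps by (simp add: lie_Wt Sg_Suc PP_LG)
  qed
  also have "\<dots> = RH (Suc m) \<mu> \<alpha> \<nu> \<beta> x"
  proof -
    obtain n where n: "m = Suc n" using Suc.hyps by (cases m) auto
    show ?thesis unfolding RH_def n
      using binom_comb[of n "\<lambda>a b. PP (Sg a) (Sg b) \<mu> \<alpha> \<nu> \<beta> x"]
      by (simp add: algebra_simps)
  qed
  finally show ?case .
qed

end




lemma Hsum: fixes \<nu> \<beta> :: "'n::finite" shows "(\<Sum>\<gamma>\<in>UNIV. \<Sum>\<rho>\<in>UNIV. Hdelta \<gamma> \<rho> \<nu> \<beta> * F \<gamma> \<rho>) = F \<nu> \<beta> - (F \<beta> \<nu> :: real)"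
proof -
  have d: "(\<Sum>\<gamma>\<in>UNIV. \<Sum>\<rho>\<in>UNIV. (if \<gamma> = a \<and> \<rho> = b then 1 else 0) * F \<gamma> \<rho>) = (F a b :: real)" for a b
  proof -
    have "(\<Sum>\<rho>\<in>UNIV. (if \<gamma> = a \<and> \<rho> = b then 1 else 0) * F \<gamma> \<rho>) = (if \<gamma> = a then F \<gamma> b else 0)" for \<gamma>
      by (cases "\<gamma> = a") (simp_all add: if_distrib[of "\<lambda>z. z * _"] sum.delta sum.delta' cong: if_cong)
    then show ?thesis by (simp add: sum.delta sum.delta')
  qed
  show ?thesis unfolding Hdelta_def left_diff_distrib sum_subtractf d ..
qed

context geo begin

lemma RH_bracket:
  assumes m: "m \<ge> 2"
  shows "RH m \<mu> \<alpha> \<nu> \<beta> x = bracketTerm m \<xi> g \<nu> \<mu> \<alpha> \<beta> x - bracketTerm m \<xi> g \<beta> \<mu> \<alpha> \<nu> x"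
proof -
  have sh: "(\<Sum>k\<in>{0..m-2}. h (Suc k)) = (\<Sum>j\<in>{1..m-1}. h j)" for h :: "nat \<Rightarrow> real"
  proof -
    have "m - 1 = Suc (m - 2)" using m by simp
    then show ?thesis using sum.shift_bounds_cl_Suc_ivl[of h 0 "m-2"] by simp
  qed
  have "(\<Sum>j\<in>{1..m-1}. real (m choose j) * PP (Sg (m-j)) (Sg j) \<mu> \<alpha> \<nu> \<beta> x)
     = (\<Sum>k\<in>{0..m-2}. real (m choose (k+1)) * PP (Sg (m-k-1)) (Sg (k+1)) \<mu> \<alpha> \<nu> \<beta> x)"
    using sh[of "\<lambda>j. real (m choose j) * PP (Sg (m-j)) (Sg j) \<mu> \<alpha> \<nu> \<beta> x"] by simp
  then show ?thesis
    unfolding RH_def bracketTerm_def Wt_def PP_def C4_def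
    by (simp only: sum_subtractf right_diff_distrib sum.distrib)
qed

lemma lie02_local:
  assumes "\<And>a b y. y \<in> U \<Longrightarrow> X a b y = Y a b y" and x: "x \<in> U"
  shows "lie02 \<xi> X \<alpha> \<beta> x = lie02 \<xi> Y \<alpha> \<beta> x"
proof -
  have "pd i (X a b) x = pd i (Y a b) x" for i a b
    by (rule pd_local[OF U x]) (rule assms(1))
  then show ?thesis unfolding lie02_def using assms by simp
qed

lemma lie_contract:
  assumes T: "sm13 T" and x: "x \<in> U"
  shows "lie02 \<xi> (\<lambda>\<alpha> \<beta> y. \<Sum>\<mu>\<in>UNIV. T \<mu> \<alpha> \<mu> \<beta> y) \<alpha> \<beta> x = (\<Sum>\<mu>\<in>UNIV. lie13 \<xi> T \<mu> \<alpha> \<mu> \<beta> x)"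
  using T x
  apply (simp add: lie02_def lie13_def pdS)
  apply (simp add: sumS)
  apply (rule sym_sum)
  apply (simp add: algebra_simps)
  done

lemma main_ricci:
  assumes x: "x \<in> U"
  shows "(lie02 \<xi> ^^ m) (ricci g) \<alpha> \<beta> x = (\<Sum>\<mu>\<in>UNIV. (lie13 \<xi> ^^ m) (riem g) \<mu> \<alpha> \<mu> \<beta> x)"
  using x
proof (induction m arbitrary: x \<alpha> \<beta>)
  case 0 then show ?case by (simp add: ricci_def)
next
  case (Suc m)
  have "(lie02 \<xi> ^^ Suc m) (ricci g) \<alpha> \<beta> x = lie02 \<xi> ((lie02 \<xi> ^^ m) (ricci g)) \<alpha> \<beta> x" by simp
  also have "\<dots> = lie02 \<xi> (\<lambda>\<alpha> \<beta> y. \<Sum>\<mu>\<in>UNIV. (lie13 \<xi> ^^ m) (riem g) \<mu> \<alpha> \<mu> \<beta> y) \<alpha> \<beta> x"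
    by (rule lie02_local[OF _ Suc.prems]) (rule Suc.IH)
  also have "\<dots> = (\<Sum>\<mu>\<in>UNIV. (lie13 \<xi> ^^ Suc m) (riem g) \<mu> \<alpha> \<mu> \<beta> x)"
    using Suc.prems by (simp add: lie_contract)
  finally show ?case .
qed

end

theorem mainTheorem12:
  fixes U :: "(real^'n::finite) set" and g :: "'n t02" and \<xi> :: "'n vf" and m :: nat
  assumes "open U" and "semi_riem_metric U g"
    and "\<forall>i. coord_smooth U (\<xi> i)"
    and "m \<ge> 2" and "x \<in> U"
  shows "(\<forall>\<mu> \<alpha> \<nu> \<beta>. (lie13 \<xi> ^^ m) (riem g) \<mu> \<alpha> \<nu> \<beta> x =
            (\<Sum>\<gamma>\<in>UNIV. \<Sum>\<rho>\<in>UNIV. Hdelta \<gamma> \<rho> \<nu> \<beta> * bracketTerm m \<xi> g \<gamma> \<mu> \<alpha> \<rho> x))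
       \<and> (\<forall>\<alpha> \<beta>. (lie02 \<xi> ^^ m) (ricci g) \<alpha> \<beta> x =
            (\<Sum>\<mu>\<in>UNIV. \<Sum>\<gamma>\<in>UNIV. \<Sum>\<rho>\<in>UNIV. Hdelta \<gamma> \<rho> \<mu> \<beta> * bracketTerm m \<xi> g \<gamma> \<mu> \<alpha> \<rho> x))"
proof -
  interpret geo U g \<xi> using assms(1-3) by unfold_locales auto
  have R: "(lie13 \<xi> ^^ m) (riem g) \<mu> \<alpha> \<nu> \<beta> x =
            (\<Sum>\<gamma>\<in>UNIV. \<Sum>\<rho>\<in>UNIV. Hdelta \<gamma> \<rho> \<nu> \<beta> * bracketTerm m \<xi> g \<gamma> \<mu> \<alpha> \<rho> x)" for \<mu> \<alpha> \<nu> \<beta>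
  proof -
    have "(lie13 \<xi> ^^ m) (riem g) \<mu> \<alpha> \<nu> \<beta> x = RH m \<mu> \<alpha> \<nu> \<beta> x"
      using assms(4,5) by (intro main_riem) auto
    also have "\<dots> = bracketTerm m \<xi> g \<nu> \<mu> \<alpha> \<beta> x - bracketTerm m \<xi> g \<beta> \<mu> \<alpha> \<nu> x"
      using assms(4) by (rule RH_bracket)
    also have "\<dots> = (\<Sum>\<gamma>\<in>UNIV. \<Sum>\<rho>\<in>UNIV. Hdelta \<gamma> \<rho> \<nu> \<beta> * bracketTerm m \<xi> g \<gamma> \<mu> \<alpha> \<rho> x)"
      by (rule Hsum[symmetric])
    finally show ?thesis .
  qed
  show ?thesis
  proof (intro conjI allI)
    fix \<mu> \<alpha> \<nu> \<beta> show "(lie13 \<xi> ^^ m) (riem g) \<mu> \<alpha> \<nu> \<beta> x =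
            (\<Sum>\<gamma>\<in>UNIV. \<Sum>\<rho>\<in>UNIV. Hdelta \<gamma> \<rho> \<nu> \<beta> * bracketTerm m \<xi> g \<gamma> \<mu> \<alpha> \<rho> x)" by (rule R)
  next
    fix \<alpha> \<beta> show "(lie02 \<xi> ^^ m) (ricci g) \<alpha> \<beta> x =
            (\<Sum>\<mu>\<in>UNIV. \<Sum>\<gamma>\<in>UNIV. \<Sum>\<rho>\<in>UNIV. Hdelta \<gamma> \<rho> \<mu> \<beta> * bracketTerm m \<xi> g \<gamma> \<mu> \<alpha> \<rho> x)"
      using main_ricci[OF assms(5)] R by simp
  qed
qed


end
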